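(* Let $p>1$ and let $\varphi(z)=az+b$ with $a,b\in\mathbb{C}$ and $0<|a|<1-|b|$. Then the spectrum of $D_\varphi$ acting on $S^p$ is $\{0\}$.
   Context: $\mathbb{D}$ is the open unit disk. For $p>1$, $H^p$ is the Hardy space on $\mathbb{D}$ with norm $\|g\|_{H^p}^p=\sup_{0<r<1}\int_0^{2\pi}|g(re^{i\theta})|^p\frac{d\theta}{2\pi}$; $S^p$ is the space of analytic $f$ on $\mathbb{D}$ with $f'\in H^p$, normed by $\|f\|_{S^p}=|f(0)|+\|f'\|_{H^p}$. $D_\varphi f=f'\circ\varphi$. *)

theory Defs
  imports "HOL-Complex_Analysis.Complex_Analysis"
begin

definition circle_mean :: "real \<Rightarrow> (complex \<Rightarrow> complex) \<Rightarrow> real \<Rightarrow> real" where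
  "circle_mean p g r = integral {0..2*pi} (\<lambda>t. norm (g (complex_of_real r * cis t)) powr p) / (2*pi)"

definition in_Hp :: "real \<Rightarrow> (complex \<Rightarrow> complex) \<Rightarrow> bool" where
  "in_Hp p g \<longleftrightarrow> g holomorphic_on ball 0 1 \<and> bdd_above (circle_mean p g ` {0<..<1})"

definition Hp_norm :: "real \<Rightarrow> (complex \<Rightarrow> complex) \<Rightarrow> real" where
  "Hp_norm p g = (SUP r\<in>{0<..<1}. circle_mean p g r) powr (1/p)"

text \<open>The space S^p. Functions are represented as total functions on complex
  that vanish outside the unit disk (so that equality of elements is equality on the disk).\<close>
definition Sp :: "real \<Rightarrow> (complex \<Rightarrow> complex) set" where
  "Sp p = {f. f holomorphic_on ball 0 1 \<and> (\<forall>z. z \<notin> ball 0 1 \<longrightarrow> f z = 0) \<and> in_Hp p (deriv f)}"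

definition Sp_norm :: "real \<Rightarrow> (complex \<Rightarrow> complex) \<Rightarrow> real" where
  "Sp_norm p f = norm (f 0) + Hp_norm p (deriv f)"

definition Dphi :: "(complex \<Rightarrow> complex) \<Rightarrow> (complex \<Rightarrow> complex) \<Rightarrow> (complex \<Rightarrow> complex)" where
  "Dphi \<phi> f = (\<lambda>z. if z \<in> ball 0 1 then deriv f (\<phi> z) else 0)"

definition op_spectrum :: "('a \<Rightarrow> complex) set \<Rightarrow> (('a \<Rightarrow> complex) \<Rightarrow> real) \<Rightarrow>
    (('a \<Rightarrow> complex) \<Rightarrow> ('a \<Rightarrow> complex)) \<Rightarrow> complex set" where
  "op_spectrum X N T = {\<mu>. \<not> (\<exists>R.
      (\<forall>f\<in>X. (\<lambda>z. \<mu> * f z - T f z) \<in> X) \<and>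
      (\<forall>g\<in>X. R g \<in> X \<and> (\<lambda>z. \<mu> * R g z - T (R g) z) = g) \<and>
      (\<forall>f\<in>X. R (\<lambda>z. \<mu> * f z - T f z) = f) \<and>
      (\<exists>C. \<forall>g\<in>X. N (R g) \<le> C * N g))}"

end

theory Submission imports Defs begin

lemma cauchy_mean_bound:
  assumes h: "h holomorphic_on ball 0 1" and r: "0<r" "r<1" and w: "norm w < r"
  shows "norm (h w) \<le> r/(r - norm w) * (integral {0..2*pi} (\<lambda>t. norm (h (complex_of_real r * cis t))) / (2*pi))"
proof -
  have cb: "cball 0 r \<subseteq> ball (0::complex) 1" using r by auto
  have cont: "continuous_on (cball 0 r) h"
    using holomorphic_on_imp_continuous_on[OF h] cb continuous_on_subset by blast
  have hb: "h holomorphic_on ball 0 r" by (rule holomorphic_on_subset[OF h]) (use r in auto)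
  have "((\<lambda>u. h u/(u-w)) has_contour_integral (2 * of_real pi * \<i> * h w)) (circlepath 0 r)"
    by (rule Cauchy_integral_circlepath[OF cont hb]) (use w in simp)
  hence I: "((\<lambda>t. h (0 + r * cis t)/((0 + r * cis t) - w) * r * \<i> * cis t) has_integral (2 * of_real pi * \<i> * h w)) {0..2*pi}"
    unfolding circlepath_def by (subst (asm) has_contour_integral_part_circlepath_iff) auto
  have ccont: "continuous_on {0..2*pi} (\<lambda>t. norm (h (complex_of_real r * cis t)))"
  proof -
    have "continuous_on {0..2*pi} (\<lambda>t. complex_of_real r * cis t)"
      by (intro continuous_intros)
    moreover have "(\<lambda>t. complex_of_real r * cis t) ` {0..2*pi} \<subseteq> cball 0 r"
      using r by (auto simp: norm_mult)
    ultimately show ?thesis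
      by (intro continuous_on_norm continuous_on_compose2[OF cont]) auto
  qed
  define K where "K = r / (r - norm w)"
  have K: "K \<ge> 0" using w r by (simp add: K_def)
  have J: "((\<lambda>t. norm (h (complex_of_real r * cis t)) * K) has_integral
      integral {0..2*pi} (\<lambda>t. norm (h (complex_of_real r * cis t))) * K) {0..2*pi}"
    by (intro has_integral_mult_left integrable_integral integrable_continuous_interval ccont)
  have "norm (2 * of_real pi * \<i> * h w) \<le> integral {0..2*pi} (\<lambda>t. norm (h (complex_of_real r * cis t))) * K"
  proof -
    have "norm (integral {0..2*pi} (\<lambda>t. h (0 + r * cis t)/((0 + r * cis t) - w) * r * \<i> * cis t))
       \<le> integral {0..2*pi} (\<lambda>t. norm (h (complex_of_real r * cis t)) * K)"
  proof (rule integral_norm_bound_integral[OF has_integral_integrable[OF I] has_integral_integrable[OF J]])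
    fix t :: real assume "t \<in> {0..2*pi}"
    have nz: "norm (complex_of_real r * cis t) = r" using r by (simp add: norm_mult)
    have d: "norm (complex_of_real r * cis t - w) \<ge> r - norm w"
      using norm_triangle_ineq2[of "complex_of_real r * cis t" w] nz by simp
    have dp: "r - norm w > 0" using w by simp
    have "norm (h (0 + r * cis t)/((0 + r * cis t) - w) * r * \<i> * cis t)
        = norm (h (complex_of_real r * cis t)) * r / norm (complex_of_real r * cis t - w)"
      using r by (simp add: norm_mult norm_divide)
    also have "\<dots> \<le> norm (h (complex_of_real r * cis t)) * r / (r - norm w)"
      by (intro divide_left_mono d mult_nonneg_nonneg mult_pos_pos) (use r dp d in auto)
    also have "\<dots> = norm (h (complex_of_real r * cis t)) * K" by (simp add: K_def)
    finally show "norm (h (0 + r * cis t)/((0 + r * cis t) - w) * r * \<i> * cis t)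
        \<le> norm (h (complex_of_real r * cis t)) * K" .
  qed
  thus ?thesis using integral_unique[OF I] integral_unique[OF J] by simp
  qed
  hence "2 * pi * norm (h w) \<le> integral {0..2*pi} (\<lambda>t. norm (h (complex_of_real r * cis t))) * K"
    by (simp add: norm_mult)
  thus ?thesis unfolding K_def[symmetric] by (simp add: field_simps)
qed

lemma circ_cont:
  assumes "continuous_on (ball 0 1) h" "0 \<le> r" "r < 1"
  shows "continuous_on {0..2*pi} (\<lambda>t. h (complex_of_real r * cis t))"
proof -
  have "continuous_on {0..2*pi} (\<lambda>t. complex_of_real r * cis t)"
    by (intro continuous_intros)
  moreover have "(\<lambda>t. complex_of_real r * cis t) ` {0..2*pi} \<subseteq> ball 0 1"
    using assms by (auto simp: norm_mult)
  ultimately show ?thesis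
    by (intro continuous_on_compose2[OF assms(1)]) auto
qed

lemma circ_int_norm:
  assumes "continuous_on (ball 0 1) h" "0 \<le> r" "r < 1"
  shows "(\<lambda>t. norm (h (complex_of_real r * cis t))) integrable_on {0..2*pi}"
  by (intro integrable_continuous_interval continuous_on_norm circ_cont assms)

lemma circ_int_powr:
  assumes "continuous_on (ball 0 1) h" "0 \<le> r" "r < 1" "p > 0"
  shows "(\<lambda>t. norm (h (complex_of_real r * cis t)) powr p) integrable_on {0..2*pi}"
proof -
  have c: "continuous_on {0..2*pi} (\<lambda>t. norm (h (complex_of_real r * cis t)))"
    by (intro continuous_on_norm circ_cont assms)
  have "continuous_on {0..2*pi} (\<lambda>t. norm (h (complex_of_real r * cis t)) powr p)"
    by (rule continuous_on_powr'[OF c continuous_on_const]) (use assms in auto)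
  thus ?thesis by (rule integrable_continuous_interval)
qed

lemma circle_mean_nonneg: "circle_mean p h r \<ge> 0"
proof -
  have "integral {0..2*pi} (\<lambda>t. norm (h (complex_of_real r * cis t)) powr p) \<ge> 0"
    by (cases "(\<lambda>t. norm (h (complex_of_real r * cis t)) powr p) integrable_on {0..2*pi}")
       (auto intro: integral_nonneg simp: not_integrable_integral)
  thus ?thesis unfolding circle_mean_def by simp
qed

lemma elem_ineq:
  fixes x t p :: real
  assumes "x \<ge> 0" "t > 0" "p \<ge> 1"
  shows "x \<le> t + t powr (1-p) * x powr p"
proof (cases "x \<le> t")
  case True thus ?thesis by (simp add: add_increasing2)
next
  case False
  hence xt: "x / t \<ge> 1" using assms by simp
  have "(x/t) powr 1 \<le> (x/t) powr p" by (rule powr_mono) (use xt assms in auto)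
  hence "x/t \<le> (x/t) powr p" using xt powr_one[of "x/t"] by simp
  hence "x \<le> t * (x/t) powr p" using assms by (simp add: field_simps)
  also have "t * (x/t) powr p = t powr (1-p) * x powr p"
    using assms False by (simp add: powr_divide powr_diff field_simps)
  finally show ?thesis using assms by (simp add: add_increasing)
qed

lemma mean1_le_Hp:
  assumes p: "p > 1" and h: "in_Hp p h" and r: "0 < r" "r < 1"
  shows "integral {0..2*pi} (\<lambda>t. norm (h (complex_of_real r * cis t))) / (2*pi) \<le> 2 * Hp_norm p h"
proof -
  have hol: "h holomorphic_on ball 0 1" and bdd: "bdd_above (circle_mean p h ` {0<..<1})"
    using h unfolding in_Hp_def by auto
  have cont: "continuous_on (ball 0 1) h" using hol holomorphic_on_imp_continuous_on by blast
  define S where "S = (SUP r\<in>{0<..<1}. circle_mean p h r)"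
  have cS: "circle_mean p h r \<le> S" unfolding S_def by (rule cSUP_upper[OF _ bdd]) (use r in auto)
  have S0: "S \<ge> 0" using cS circle_mean_nonneg[of p h r] by linarith
  define m where "m = integral {0..2*pi} (\<lambda>t. norm (h (complex_of_real r * cis t))) / (2*pi)"
  have key: "m \<le> t + t powr (1-p) * S" if t: "t > 0" for t
  proof -
    have "integral {0..2*pi} (\<lambda>t. norm (h (complex_of_real r * cis t)))
      \<le> integral {0..2*pi} (\<lambda>s. t + t powr (1-p) * norm (h (complex_of_real r * cis s)) powr p)"
      using circ_int_powr[OF cont, of r p] r p t
      by (intro integral_le circ_int_norm integrable_add integrable_const_ivl integrable_on_mult_right cont elem_ineq) auto
    also have "\<dots> = 2*pi*t + t powr (1-p) * integral {0..2*pi} (\<lambda>s. norm (h (complex_of_real r * cis s)) powr p)"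
      using circ_int_powr[OF cont, of r p] r p by (subst integral_add) (auto intro!: integrable_on_mult_right)
    finally have "m \<le> t + t powr (1-p) * circle_mean p h r"
      unfolding m_def circle_mean_def by (simp add: field_simps)
    also have "\<dots> \<le> t + t powr (1-p) * S" using cS by (simp add: mult_left_mono)
    finally show ?thesis .
  qed
  have N: "Hp_norm p h = S powr (1/p)" unfolding Hp_norm_def S_def ..
  show ?thesis
  proof (cases "S = 0")
    case True
    have "m \<le> 0"
    proof (rule field_le_epsilon)
      fix e :: real assume "e > 0" thus "m \<le> 0 + e" using key[of e] True by simp
    qed
    thus ?thesis using True N unfolding m_def by simp
  next
    case False
    hence Sp: "S > 0" using S0 by simp
    define t where "t = S powr (1/p)"
    have t: "t > 0" using Sp by (simp add: t_def)
    have "t powr (1-p) * S = t"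
    proof -
      have "t powr (1-p) = S powr ((1-p)/p)" unfolding t_def powr_powr by simp
      hence "t powr (1-p) * S = S powr ((1-p)/p) * S powr 1" using Sp by simp
      also have "\<dots> = S powr ((1-p)/p + 1)" by (simp add: powr_add)
      also have "(1-p)/p + 1 = 1/p" using p by (simp add: field_simps)
      finally show ?thesis unfolding t_def .
    qed
    thus ?thesis using key[OF t] N unfolding m_def t_def by simp
  qed
qed

lemma Hp_norm_nonneg: "Hp_norm p h \<ge> 0"
  unfolding Hp_norm_def by simp

lemma sup_bound:
  assumes p: "p > 1" and h: "in_Hp p h" and r1: "0 \<le> r1" "r1 < 1" and w: "norm w \<le> r1"
  shows "norm (h w) \<le> 2*(1+r1)/(1-r1) * Hp_norm p h"
proof -
  define r where "r = (1+r1)/2"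
  have r: "0 < r" "r < 1" "norm w < r" using r1 w by (auto simp: r_def)
  have hol: "h holomorphic_on ball 0 1" using h unfolding in_Hp_def by auto
  have "norm (h w) \<le> r/(r - norm w) * (integral {0..2*pi} (\<lambda>t. norm (h (complex_of_real r * cis t))) / (2*pi))"
    by (rule cauchy_mean_bound[OF hol r])
  also have "\<dots> \<le> r/(r - norm w) * (2 * Hp_norm p h)"
    by (intro mult_left_mono mean1_le_Hp[OF p h r(1,2)]) (use r in auto)
  also have "\<dots> \<le> r/(r - r1) * (2 * Hp_norm p h)"
  proof -
    have d1: "r - r1 > 0" unfolding r_def using r1 w by (simp add: field_simps)
    have d2: "r - r1 \<le> r - norm w" unfolding r_def using r1 w by linarith
    note d = d1 d2
    show ?thesis
      by (intro mult_right_mono divide_left_mono mult_pos_pos) (use r d Hp_norm_nonneg[of p h] in auto)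
  qed
  also have "\<dots> = 2*(1+r1)/(1-r1) * Hp_norm p h" using r1 by (simp add: r_def field_simps)
  finally show ?thesis .
qed

lemma powr_sum_le:
  fixes x y q :: real
  assumes "x \<ge> 0" "y \<ge> 0" "q > 0"
  shows "(x+y) powr q \<le> 2 powr q * (x powr q + y powr q)"
proof -
  have "(x+y) powr q \<le> (2 * max x y) powr q" by (intro powr_mono2) (use assms in auto)
  also have "\<dots> = 2 powr q * max x y powr q" using assms by (simp add: powr_mult)
  also have "max x y powr q \<le> x powr q + y powr q" by (auto simp: max_def)
  hence "2 powr q * max x y powr q \<le> 2 powr q * (x powr q + y powr q)" by simp
  finally show ?thesis .
qed

lemma Hp_perturb:
  assumes p: "p > 1" and u: "in_Hp p u" and F: "F holomorphic_on ball 0 1"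
    and eq: "\<And>w. w \<in> ball 0 1 \<Longrightarrow> F w = c * u w + v w"
    and vb: "\<And>w. w \<in> ball 0 1 \<Longrightarrow> norm (v w) \<le> E"
  shows "in_Hp p F \<and> Hp_norm p F \<le> 4 * (norm c * Hp_norm p u + E)"
proof -
  have "norm (v 0) \<le> E" by (rule vb) simp
  hence E: "E \<ge> 0" using norm_ge_zero[of "v 0"] by linarith
  have bdd: "bdd_above (circle_mean p u ` {0<..<1})" and uhol: "u holomorphic_on ball 0 1"
    using u unfolding in_Hp_def by auto
  define S where "S = (SUP r\<in>{0<..<1}. circle_mean p u r)"
  have cS: "circle_mean p u r \<le> S" if "r \<in> {0<..<1}" for r
    unfolding S_def by (rule cSUP_upper[OF that bdd])
  have S0: "S \<ge> 0" using cS[of "1/2"] circle_mean_nonneg[of p u "1/2"] by auto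
  define Q where "Q = 2 powr p * (norm c powr p * S + E powr p)"
  have Fc: "continuous_on (ball 0 1) F" using F holomorphic_on_imp_continuous_on by blast
  have uc: "continuous_on (ball 0 1) u" using uhol holomorphic_on_imp_continuous_on by blast
  have cm: "circle_mean p F r \<le> Q" if r: "r \<in> {0<..<1}" for r
  proof -
    have r': "0 \<le> r" "r < 1" using r by auto
    have pt: "norm (F (complex_of_real r * cis t)) powr p
        \<le> 2 powr p * (norm c powr p * norm (u (complex_of_real r * cis t)) powr p + E powr p)" for t
    proof -
      have inb: "complex_of_real r * cis t \<in> ball 0 1" using r by (auto simp: norm_mult)
      have "norm (F (complex_of_real r * cis t)) \<le> norm c * norm (u (complex_of_real r * cis t)) + E"
        using eq[OF inb] vb[OF inb] norm_triangle_ineq[of "c * u (complex_of_real r * cis t)"]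
        by (simp add: norm_mult) (smt (verit) norm_triangle_ineq)
      hence "norm (F (complex_of_real r * cis t)) powr p \<le> (norm c * norm (u (complex_of_real r * cis t)) + E) powr p"
        by (intro powr_mono2) (use p in auto)
      also have "\<dots> \<le> 2 powr p * ((norm c * norm (u (complex_of_real r * cis t))) powr p + E powr p)"
        by (rule powr_sum_le) (use p E in auto)
      finally show ?thesis by (simp add: powr_mult)
    qed
    have "integral {0..2*pi} (\<lambda>t. norm (F (complex_of_real r * cis t)) powr p)
       \<le> integral {0..2*pi} (\<lambda>t. 2 powr p * (norm c powr p * norm (u (complex_of_real r * cis t)) powr p + E powr p))"
      using circ_int_powr[OF Fc r', of p] circ_int_powr[OF uc r', of p] p pt
      by (intro integral_le) (auto intro!: integrable_on_mult_right integrable_add)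
    also have "\<dots> = 2 powr p * (norm c powr p * integral {0..2*pi} (\<lambda>t. norm (u (complex_of_real r * cis t)) powr p) + 2*pi * E powr p)"
    proof -
      have i1: "(\<lambda>t. norm c powr p * norm (u (complex_of_real r * cis t)) powr p) integrable_on {0..2*pi}"
        using circ_int_powr[OF uc r', of p] p by (intro integrable_on_mult_right) auto
      have "integral {0..2*pi} (\<lambda>t. norm c powr p * norm (u (complex_of_real r * cis t)) powr p + E powr p)
        = integral {0..2*pi} (\<lambda>t. norm c powr p * norm (u (complex_of_real r * cis t)) powr p) + integral {0..2*pi} (\<lambda>t. E powr p)"
        by (rule integral_add[OF i1]) auto
      thus ?thesis by simp
    qed
    finally have "circle_mean p F r \<le> 2 powr p * (norm c powr p * circle_mean p u r + E powr p)"
      unfolding circle_mean_def by (simp add: field_simps)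
    also have "\<dots> \<le> Q" unfolding Q_def using cS[OF r]
      by (intro mult_left_mono add_right_mono) auto
    finally show ?thesis .
  qed
  have bddF: "bdd_above (circle_mean p F ` {0<..<1})" by (rule bdd_aboveI2[where M=Q]) (use cm in auto)
  have SF: "(SUP r\<in>{0<..<1}. circle_mean p F r) \<le> Q" by (rule cSUP_least) (use cm in auto)
  have SF0: "(SUP r\<in>{0<..<1}. circle_mean p F r) \<ge> 0"
    using cSUP_upper[OF _ bddF, of "1/2"] circle_mean_nonneg[of p F "1/2"] by auto
  have "Hp_norm p F \<le> Q powr (1/p)" unfolding Hp_norm_def
    by (rule powr_mono2) (use SF SF0 p in auto)
  also have "Q powr (1/p) = 2 * (norm c powr p * S + E powr p) powr (1/p)"
  proof -
    have "Q powr (1/p) = (2 powr p) powr (1/p) * (norm c powr p * S + E powr p) powr (1/p)"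
      unfolding Q_def using S0 E by (simp add: powr_mult)
    also have "(2 powr p) powr (1/p) = 2" using p by (simp add: powr_powr)
    finally show ?thesis .
  qed
  also have "(norm c powr p * S + E powr p) powr (1/p) \<le> 2 powr (1/p) * ((norm c powr p * S) powr (1/p) + (E powr p) powr (1/p))"
    by (rule powr_sum_le) (use p S0 in auto)
  also have "(norm c powr p * S) powr (1/p) = norm c * Hp_norm p u"
  proof -
    have "(norm c powr p * S) powr (1/p) = (norm c powr p) powr (1/p) * S powr (1/p)"
      using S0 by (simp add: powr_mult)
    also have "(norm c powr p) powr (1/p) = norm c" using p by (simp add: powr_powr)
    finally show ?thesis unfolding Hp_norm_def S_def by simp
  qed
  also have "(E powr p) powr (1/p) = E" using p E by (simp add: powr_powr)
  also have "2 powr (1/p) \<le> (2::real) powr 1" by (rule powr_mono) (use p in auto)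
  hence "2 * (2 powr (1/p) * (norm c * Hp_norm p u + E)) \<le> 2 * (2 * (norm c * Hp_norm p u + E))"
    using E Hp_norm_nonneg[of p u] by (intro mult_left_mono mult_right_mono) auto
  finally have "Hp_norm p F \<le> 4 * (norm c * Hp_norm p u + E)" by simp
  thus ?thesis using F bddF unfolding in_Hp_def by auto
qed

definition phi :: "complex \<Rightarrow> complex \<Rightarrow> complex \<Rightarrow> complex" where
  "phi a b = (\<lambda>z. a*z+b)"

definition coef :: "complex \<Rightarrow> nat \<Rightarrow> complex" where
  "coef a n = (\<Prod>k<n. a^k)"

lemma coef_0 [simp]: "coef a 0 = 1" by (simp add: coef_def)
lemma coef_Suc: "coef a (Suc n) = coef a n * a^n" by (simp add: coef_def)

lemma phi_ball:
  assumes "norm a + norm b < 1" "norm z < 1"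
  shows "norm (phi a b z) \<le> norm a + norm b"
proof -
  have "norm (phi a b z) \<le> norm a * norm z + norm b"
    unfolding phi_def using norm_triangle_ineq[of "a*z" b] by (simp add: norm_mult)
  also have "\<dots> \<le> norm a + norm b" using assms mult_left_le[of "norm z" "norm a"] by simp
  finally show ?thesis .
qed

lemma iter_ball:
  assumes ab: "norm a + norm b < 1" and z: "norm z < 1"
  shows "norm ((phi a b ^^ n) z) < 1" and "n \<ge> 1 \<Longrightarrow> norm ((phi a b ^^ n) z) \<le> norm a + norm b"
proof -
  have *: "norm ((phi a b ^^ n) z) < 1" for n
  proof (induction n)
    case 0 thus ?case using z by simp
  next
    case (Suc n) thus ?case using phi_ball[OF ab Suc] ab by simp
  qed
  show "norm ((phi a b ^^ n) z) < 1" by (rule *)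
  assume "n \<ge> 1"
  then obtain m where "n = Suc m" by (cases n) auto
  thus "norm ((phi a b ^^ n) z) \<le> norm a + norm b" using phi_ball[OF ab *[of m]] by simp
qed

lemma iter_deriv: "((phi a b ^^ n) has_field_derivative a^n) (at z)"
proof (induction n arbitrary: z)
  case 0 thus ?case by (simp add: id_def)
next
  case (Suc n)
  have d: "(phi a b has_field_derivative a) (at w)" for w
    unfolding phi_def by (auto intro!: derivative_eq_intros)
  show ?case using DERIV_chain[OF d Suc.IH] by (simp add: comp_def)
qed

lemma beta_summable:
  fixes a \<nu> :: complex and \<delta> :: real
  assumes a: "norm a < 1" and d: "\<delta> > 0"
  shows "summable (\<lambda>n. norm \<nu> ^ Suc n * norm (coef a n) * fact (n-1) / \<delta>^(n-1))"
proof -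
  define \<beta> where "\<beta> = (\<lambda>n. norm \<nu> ^ Suc n * norm (coef a n) * fact (n-1) / \<delta>^(n-1))"
  define q where "q = (\<lambda>n. norm \<nu> / \<delta> * (of_nat n * norm a ^ n))"
  have "(\<lambda>n. of_nat n * norm a ^ n) \<longlonglongrightarrow> (0::real)" by (rule powser_times_n_limit_0) (use a in simp)
  hence "q \<longlonglongrightarrow> 0" unfolding q_def using tendsto_mult_right_zero by blast
  hence "eventually (\<lambda>n. norm (q n) < 1/2) sequentially"
    by (rule order_tendstoD(2)[OF tendsto_norm_zero]) simp
  then obtain N where N: "\<And>n. n \<ge> N \<Longrightarrow> norm (q n) < 1/2" unfolding eventually_sequentially by auto
  have b0: "\<beta> n \<ge> 0" for n unfolding \<beta>_def using d by simp
  have "summable \<beta>"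
  proof (rule summable_ratio_test[of "1/2" "max N 1"])
    fix n assume n: "n \<ge> max N 1"
    then obtain m where m: "n = Suc m" by (cases n) auto
    have "\<beta> (Suc n) = \<beta> n * q n"
      unfolding \<beta>_def q_def m using d by (simp add: coef_Suc norm_mult norm_power field_simps)
    also have "\<dots> \<le> \<beta> n * (1/2)"
      using N[of n] n b0[of n] by (intro mult_left_mono) auto
    finally show "norm (\<beta> (Suc n)) \<le> 1/2 * norm (\<beta> n)" using b0 by (simp add: mult.commute)
  qed simp
  thus ?thesis unfolding \<beta>_def .
qed

lemma deriv_bound:
  fixes f :: "complex \<Rightarrow> complex" and \<rho> :: real
  assumes p: "p > 1" and fh: "f holomorphic_on ball 0 1" and fH: "in_Hp p (deriv f)"
    and rho: "0 \<le> \<rho>" "\<rho> < 1" and v: "norm v \<le> \<rho>" and n: "n \<ge> 1"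
  shows "norm ((deriv^^n) f v) \<le> fact (n-1) * (2*(1+(1+\<rho>)/2)/(1-(1+\<rho>)/2) * Hp_norm p (deriv f)) / ((1-\<rho>)/2)^(n-1)"
proof -
  define r1 where "r1 = (1+\<rho>)/2"
  define \<delta> where "\<delta> = (1-\<rho>)/2"
  have r1: "0 \<le> r1" "r1 < 1" and dp: "\<delta> > 0" using rho by (auto simp: r1_def \<delta>_def)
  have rd: "\<rho> + \<delta> = r1" unfolding r1_def \<delta>_def by (simp add: field_simps)
  obtain m where m: "n = Suc m" using n by (cases n) auto
  have e: "(deriv^^n) f = (deriv^^m) (deriv f)" unfolding m funpow_Suc_right by simp
  have dh: "deriv f holomorphic_on ball 0 1" by (rule holomorphic_deriv[OF fh]) simp
  have sub: "cball v \<delta> \<subseteq> ball 0 1"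
  proof
    fix x assume "x \<in> cball v \<delta>"
    hence "norm x \<le> norm v + \<delta>" using norm_triangle_ineq2[of x v] by (simp add: dist_norm norm_minus_commute)
    thus "x \<in> ball 0 1" using v rd r1 by simp
  qed
  have "norm ((deriv^^m) (deriv f) v) \<le> fact m * (2*(1+r1)/(1-r1) * Hp_norm p (deriv f)) / \<delta>^m"
  proof (rule Cauchy_inequality)
    show "deriv f holomorphic_on ball v \<delta>" using dh sub ball_subset_cball holomorphic_on_subset by blast
    show "continuous_on (cball v \<delta>) (deriv f)"
      using holomorphic_on_imp_continuous_on[OF dh] sub continuous_on_subset by blast
    show "0 < \<delta>" by (rule dp)
    fix x assume x: "norm (v - x) = \<delta>"
    have "norm x \<le> norm v + \<delta>" using norm_triangle_ineq2[of x v] x by (simp add: norm_minus_commute)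
    hence "norm x \<le> r1" using v rd by simp
    thus "norm (deriv f x) \<le> 2*(1+r1)/(1-r1) * Hp_norm p (deriv f)"
      by (rule sup_bound[OF p fH r1])
  qed
  thus ?thesis unfolding e r1_def[symmetric] \<delta>_def[symmetric] using m by simp
qed

definition tn :: "complex \<Rightarrow> complex \<Rightarrow> nat \<Rightarrow> (complex \<Rightarrow> complex) \<Rightarrow> complex \<Rightarrow> complex" where
  "tn a b n g z = coef a n * (deriv^^n) g ((phi a b ^^ n) z)"

definition dterm :: "complex \<Rightarrow> complex \<Rightarrow> complex \<Rightarrow> nat \<Rightarrow> (complex \<Rightarrow> complex) \<Rightarrow> complex \<Rightarrow> complex" where
  "dterm a b \<nu> n g z = \<nu>^Suc n * coef a (Suc n) * (deriv^^Suc n) g ((phi a b ^^ n) z)"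

definition Rop :: "complex \<Rightarrow> complex \<Rightarrow> complex \<Rightarrow> (complex \<Rightarrow> complex) \<Rightarrow> complex \<Rightarrow> complex" where
  "Rop a b \<nu> g = (\<lambda>z. if z \<in> ball 0 1 then (\<Sum>n. \<nu>^Suc n * tn a b n g z) else 0)"

lemma tn_0 [simp]: "tn a b 0 g z = g z" by (simp add: tn_def)

lemma tn_deriv:
  assumes ab: "norm a + norm b < 1" and gh: "g holomorphic_on ball 0 1" and x: "x \<in> ball 0 1"
  shows "((\<lambda>z. \<nu>^Suc n * tn a b n g z) has_field_derivative dterm a b \<nu> n g x) (at x)"
proof -
  have hh: "(deriv^^n) g holomorphic_on ball 0 1" by (rule holomorphic_higher_deriv[OF gh]) simp
  have w: "(phi a b ^^ n) x \<in> ball 0 1" using iter_ball(1)[OF ab, of x n] x by simp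
  have d1: "((deriv^^n) g has_field_derivative (deriv^^Suc n) g ((phi a b ^^ n) x)) (at ((phi a b ^^ n) x))"
    using holomorphic_derivI[OF hh open_ball w, of UNIV] by simp
  have d2: "((\<lambda>z. (deriv^^n) g ((phi a b ^^ n) z)) has_field_derivative
      (deriv^^Suc n) g ((phi a b ^^ n) x) * a^n) (at x)"
    by (rule DERIV_chain2[OF d1 iter_deriv])
  have "((\<lambda>z. \<nu>^Suc n * coef a n * (deriv^^n) g ((phi a b ^^ n) z)) has_field_derivative
      \<nu>^Suc n * coef a n * ((deriv^^Suc n) g ((phi a b ^^ n) x) * a^n)) (at x)"
    by (rule DERIV_cmult[OF d2])
  thus ?thesis unfolding tn_def dterm_def coef_Suc by (simp add: mult_ac)
qed

lemma sums_norm_le: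
  fixes f :: "nat \<Rightarrow> complex"
  assumes "f sums s" "\<And>n. norm (f n) \<le> b n" "summable b"
  shows "norm s \<le> suminf b"
proof -
  have sn: "summable (\<lambda>n. norm (f n))"
    by (rule summable_comparison_test'[OF assms(3)]) (use assms(2) in auto)
  have "norm s = norm (suminf f)" using assms(1) sums_unique by metis
  also have "\<dots> \<le> (\<Sum>n. norm (f n))" by (rule summable_norm[OF sn])
  also have "\<dots> \<le> suminf b" by (rule suminf_le[OF assms(2) sn assms(3)])
  finally show ?thesis .
qed

definition rho :: "complex \<Rightarrow> complex \<Rightarrow> real" where "rho a b = norm a + norm b"
definition dl :: "complex \<Rightarrow> complex \<Rightarrow> real" where "dl a b = (1 - rho a b)/2"
definition Cs :: "complex \<Rightarrow> complex \<Rightarrow> real" where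
  "Cs a b = 2*(1+(1+rho a b)/2)/(1-(1+rho a b)/2)"
definition beta :: "complex \<Rightarrow> complex \<Rightarrow> complex \<Rightarrow> nat \<Rightarrow> real" where
  "beta a b \<nu> n = norm \<nu> ^ Suc n * norm (coef a n) * fact (n-1) / dl a b^(n-1)"
definition gam :: "complex \<Rightarrow> complex \<Rightarrow> complex \<Rightarrow> nat \<Rightarrow> real" where
  "gam a b \<nu> n = norm \<nu> ^ Suc n * norm (coef a (Suc n)) * fact n / dl a b^n"

context
  fixes p :: real and a b \<nu> :: complex
  assumes p: "p > 1" and ab: "norm a + norm b < 1" and nu: "\<nu> \<noteq> 0"
begin

lemma dl_pos: "dl a b > 0" using ab by (simp add: dl_def rho_def)
lemma Cs_pos: "Cs a b > 0" using ab by (simp add: Cs_def rho_def field_simps) (use norm_ge_zero[of a] norm_ge_zero[of b] in linarith)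
lemma beta_nonneg: "beta a b \<nu> n \<ge> 0" using dl_pos by (simp add: beta_def)
lemma gam_nonneg: "gam a b \<nu> n \<ge> 0" using dl_pos by (simp add: gam_def)
lemma a_lt1: "norm a < 1" using ab norm_ge_zero[of b] by linarith

lemma beta_summable': "summable (beta a b \<nu>)"
  unfolding beta_def by (rule beta_summable[OF a_lt1 dl_pos])

lemma gam_eq: "gam a b \<nu> n = beta a b \<nu> (Suc n) / norm \<nu>"
  using nu by (simp add: gam_def beta_def)

lemma gam_summable: "summable (gam a b \<nu>)"
  unfolding gam_eq using beta_summable' summable_Suc_iff[of "beta a b \<nu>"]
  by (intro summable_divide) auto

lemma term_bound:
  assumes gh: "g holomorphic_on ball 0 1" and gH: "in_Hp p (deriv g)"
    and z: "z \<in> ball 0 1" and n: "n \<ge> 1"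
  shows "norm (\<nu>^Suc n * tn a b n g z) \<le> beta a b \<nu> n * (Cs a b * Hp_norm p (deriv g))"
proof -
  have v: "norm ((phi a b ^^ n) z) \<le> rho a b" using iter_ball(2)[OF ab, of z n] z n by (simp add: rho_def)
  have "norm ((deriv^^n) g ((phi a b ^^ n) z)) \<le> fact (n-1) * (Cs a b * Hp_norm p (deriv g)) / dl a b^(n-1)"
    using deriv_bound[OF p gh gH _ _ v n] ab unfolding Cs_def dl_def rho_def by simp
  hence "norm \<nu> ^ Suc n * norm (coef a n) * norm ((deriv^^n) g ((phi a b ^^ n) z))
      \<le> norm \<nu> ^ Suc n * norm (coef a n) * (fact (n-1) * (Cs a b * Hp_norm p (deriv g)) / dl a b^(n-1))"
    by (intro mult_left_mono) auto
  thus ?thesis unfolding tn_def beta_def by (simp add: norm_mult norm_power mult_ac)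
qed

lemma dterm_bound:
  assumes gh: "g holomorphic_on ball 0 1" and gH: "in_Hp p (deriv g)"
    and z: "z \<in> ball 0 1" and n: "n \<ge> 1"
  shows "norm (dterm a b \<nu> n g z) \<le> gam a b \<nu> n * (Cs a b * Hp_norm p (deriv g))"
proof -
  have v: "norm ((phi a b ^^ n) z) \<le> rho a b" using iter_ball(2)[OF ab, of z n] z n by (simp add: rho_def)
  have "norm ((deriv^^Suc n) g ((phi a b ^^ n) z)) \<le> fact n * (Cs a b * Hp_norm p (deriv g)) / dl a b^n"
    using deriv_bound[OF p gh gH _ _ v, of "Suc n"] ab unfolding Cs_def dl_def rho_def by simp
  hence "norm \<nu> ^ Suc n * norm (coef a (Suc n)) * norm ((deriv^^Suc n) g ((phi a b ^^ n) z))
      \<le> norm \<nu> ^ Suc n * norm (coef a (Suc n)) * (fact n * (Cs a b * Hp_norm p (deriv g)) / dl a b^n)"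
    by (intro mult_left_mono) auto
  thus ?thesis unfolding dterm_def gam_def by (simp add: norm_mult norm_power mult_ac)
qed

lemma dterm_0: "dterm a b \<nu> 0 g z = \<nu> * deriv g z"
  by (simp add: dterm_def coef_def)

lemma R_series:
  assumes gh: "g holomorphic_on ball 0 1" and gH: "in_Hp p (deriv g)"
  shows "\<forall>x\<in>ball 0 1. (\<lambda>n. \<nu>^Suc n * tn a b n g x) sums Rop a b \<nu> g x"
    and "Rop a b \<nu> g holomorphic_on ball 0 1"
    and "\<forall>x\<in>ball 0 1. (\<lambda>n. dterm a b \<nu> n g x) sums deriv (Rop a b \<nu> g) x"
proof -
  define K where "K = Cs a b * Hp_norm p (deriv g)"
  have K0: "K \<ge> 0" unfolding K_def using Cs_pos Hp_norm_nonneg[of p "deriv g"] by simp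
  have "\<exists>G G'. \<forall>x \<in> ball 0 1. ((\<lambda>n. \<nu>^Suc n * tn a b n g x) sums G x) \<and> ((\<lambda>n. dterm a b \<nu> n g x) sums G' x) \<and> (G has_field_derivative G' x) (at x)"
  proof (rule series_and_derivative_comparison_complex)
    show "open (ball (0::complex) 1)" by simp
    show "\<And>n x. x \<in> ball 0 1 \<Longrightarrow> ((\<lambda>z. \<nu>^Suc n * tn a b n g z) has_field_derivative dterm a b \<nu> n g x) (at x)"
      by (rule tn_deriv[OF ab gh])
    fix x :: complex assume "x \<in> ball 0 1"
    show "\<exists>d h. 0 < d \<and> summable h \<and> range h \<subseteq> \<real>\<^sub>\<ge>\<^sub>0 \<and> (\<forall>\<^sub>F n in sequentially. \<forall>y\<in>ball x d \<inter> ball 0 1. cmod (\<nu>^Suc n * tn a b n g y) \<le> cmod (h n))"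
    proof (intro exI conjI)
      show "(0::real) < 1" by simp
      show "summable (\<lambda>n. complex_of_real (beta a b \<nu> n * K))"
      proof -
        have "summable (\<lambda>n. beta a b \<nu> n * K)" by (rule summable_mult2[OF beta_summable'])
        thus ?thesis by (simp only: summable_complex_of_real)
      qed
      show "range (\<lambda>n. complex_of_real (beta a b \<nu> n * K)) \<subseteq> \<real>\<^sub>\<ge>\<^sub>0"
        using beta_nonneg K0 by (auto simp: nonneg_Reals_of_real_iff)
      show "\<forall>\<^sub>F n in sequentially. \<forall>y\<in>ball x 1 \<inter> ball 0 1. cmod (\<nu>^Suc n * tn a b n g y) \<le> cmod (complex_of_real (beta a b \<nu> n * K))"
        unfolding eventually_sequentially
      proof (intro exI allI impI ballI)
        fix n :: nat and y assume n: "n \<ge> 1" and y: "y \<in> ball x 1 \<inter> ball 0 1"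
        have "cmod (\<nu>^Suc n * tn a b n g y) \<le> beta a b \<nu> n * K"
          unfolding K_def by (rule term_bound[OF gh gH _ n]) (use y in auto)
        thus "cmod (\<nu>^Suc n * tn a b n g y) \<le> cmod (complex_of_real (beta a b \<nu> n * K))"
        proof -
          have "cmod (complex_of_real (beta a b \<nu> n * K)) = beta a b \<nu> n * K"
            unfolding norm_of_real using beta_nonneg[of n] K0 by simp
          thus ?thesis using \<open>cmod (\<nu>^Suc n * tn a b n g y) \<le> beta a b \<nu> n * K\<close> by linarith
        qed
      qed
    qed
  qed
  then obtain G G' where GG: "\<And>x. x \<in> ball 0 1 \<Longrightarrow> ((\<lambda>n. \<nu>^Suc n * tn a b n g x) sums G x) \<and> ((\<lambda>n. dterm a b \<nu> n g x) sums G' x) \<and> (G has_field_derivative G' x) (at x)"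
    by blast
  have RG: "Rop a b \<nu> g x = G x" if "x \<in> ball 0 1" for x
    using GG[OF that] that sums_unique unfolding Rop_def by (metis (mono_tags))
  have RD: "(Rop a b \<nu> g has_field_derivative G' x) (at x)" if x: "x \<in> ball 0 1" for x
    by (rule has_field_derivative_transform_within_open[OF _ open_ball x]) (use GG[OF x] RG in auto)
  show "\<forall>x\<in>ball 0 1. (\<lambda>n. \<nu>^Suc n * tn a b n g x) sums Rop a b \<nu> g x"
    using GG RG by auto
  show "Rop a b \<nu> g holomorphic_on ball 0 1"
    using RD by (auto simp: holomorphic_on_open intro!: exI)
  show "\<forall>x\<in>ball 0 1. (\<lambda>n. dterm a b \<nu> n g x) sums deriv (Rop a b \<nu> g) x"
    using GG RD DERIV_imp_deriv by metis
qed

lemma shift_sum_bound: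
  fixes f :: "nat \<Rightarrow> complex" and c :: "nat \<Rightarrow> real"
  assumes sums: "f sums S" and bd: "\<And>n. norm (f (Suc n)) \<le> c (Suc n) * K" and sc: "summable c"
  shows "norm (S - f 0) \<le> (\<Sum>n. c (Suc n)) * K"
proof -
  have s1: "(\<lambda>n. f (Suc n)) sums (S - f 0)" using sums sums_Suc_iff[of f "S - f 0"] by simp
  have s2: "summable (\<lambda>n. c (Suc n) * K)"
    by (rule summable_mult2) (use sc summable_Suc_iff[of c] in auto)
  have "norm (S - f 0) \<le> (\<Sum>n. c (Suc n) * K)" by (rule sums_norm_le[OF s1 bd s2])
  also have "\<dots> = (\<Sum>n. c (Suc n)) * K"
    by (rule suminf_mult2[symmetric]) (use sc summable_Suc_iff[of c] in auto)
  finally show ?thesis .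
qed

definition Cb where "Cb = norm \<nu> + (\<Sum>n. beta a b \<nu> (Suc n)) * Cs a b + 4 * norm \<nu> + 4 * ((\<Sum>n. gam a b \<nu> (Suc n)) * Cs a b)"

lemma R_Sp:
  assumes g: "g \<in> Sp p"
  shows "Rop a b \<nu> g \<in> Sp p \<and> Sp_norm p (Rop a b \<nu> g) \<le> Cb * Sp_norm p g"
proof -
  have gh: "g holomorphic_on ball 0 1" and gH: "in_Hp p (deriv g)" using g unfolding Sp_def by auto
  note RS = R_series[OF gh gH]
  define N where "N = Hp_norm p (deriv g)"
  define K where "K = Cs a b * N"
  define Bv where "Bv = (\<Sum>n. beta a b \<nu> (Suc n))"
  define Bd where "Bd = (\<Sum>n. gam a b \<nu> (Suc n))"
  have N0: "N \<ge> 0" unfolding N_def by (rule Hp_norm_nonneg)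
  have K0: "K \<ge> 0" unfolding K_def using Cs_pos N0 by simp
  have Bv0: "Bv \<ge> 0" unfolding Bv_def
    by (rule suminf_nonneg) (use beta_summable' summable_Suc_iff[of "beta a b \<nu>"] beta_nonneg in auto)
  have Bd0: "Bd \<ge> 0" unfolding Bd_def
    by (rule suminf_nonneg) (use gam_summable summable_Suc_iff[of "gam a b \<nu>"] gam_nonneg in auto)
  have "norm (Rop a b \<nu> g 0 - \<nu>^Suc 0 * tn a b 0 g 0) \<le> Bv * K"
    unfolding Bv_def K_def
  proof (rule shift_sum_bound[OF RS(1)[rule_format, of 0] _ beta_summable'])
    fix n
    show "norm (\<nu>^Suc (Suc n) * tn a b (Suc n) g 0) \<le> beta a b \<nu> (Suc n) * (Cs a b * N)"
      unfolding N_def by (rule term_bound[OF gh gH]) auto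
  qed simp
  hence v0: "norm (Rop a b \<nu> g 0) \<le> norm \<nu> * norm (g 0) + Bv * K"
    using norm_triangle_ineq2[of "Rop a b \<nu> g 0" "\<nu> * g 0"] by (simp add: norm_mult)
  have dR: "deriv (Rop a b \<nu> g) holomorphic_on ball 0 1"
    by (rule holomorphic_deriv[OF RS(2)]) simp
  have dE: "norm (deriv (Rop a b \<nu> g) w - \<nu> * deriv g w) \<le> Bd * K" if w: "w \<in> ball 0 1" for w
  proof -
    have "norm (deriv (Rop a b \<nu> g) w - dterm a b \<nu> 0 g w) \<le> Bd * K"
      unfolding Bd_def K_def
    proof (rule shift_sum_bound[OF RS(3)[rule_format, OF w] _ gam_summable])
      fix n
      show "norm (dterm a b \<nu> (Suc n) g w) \<le> gam a b \<nu> (Suc n) * (Cs a b * N)"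
        unfolding N_def by (rule dterm_bound[OF gh gH w]) auto
    qed
    thus ?thesis by (simp add: dterm_0)
  qed
  have HP: "in_Hp p (deriv (Rop a b \<nu> g)) \<and> Hp_norm p (deriv (Rop a b \<nu> g)) \<le> 4 * (norm \<nu> * N + Bd * K)"
    unfolding N_def
    by (rule Hp_perturb[OF p gH dR, of \<nu> "\<lambda>w. deriv (Rop a b \<nu> g) w - \<nu> * deriv g w"]) (use dE in auto)
  have mem: "Rop a b \<nu> g \<in> Sp p"
    unfolding Sp_def using RS(2) HP by (auto simp: Rop_def)
  have "Sp_norm p (Rop a b \<nu> g) \<le> norm \<nu> * norm (g 0) + Bv * K + 4 * (norm \<nu> * N + Bd * K)"
    unfolding Sp_norm_def using v0 HP by linarith
  also have "\<dots> = norm \<nu> * norm (g 0) + (Bv * Cs a b + 4 * norm \<nu> + 4 * (Bd * Cs a b)) * N"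
    unfolding K_def by (simp add: algebra_simps)
  also have "\<dots> \<le> Cb * norm (g 0) + Cb * N"
  proof (intro add_mono mult_right_mono)
    show "norm \<nu> \<le> Cb" unfolding Cb_def Bv_def[symmetric] Bd_def[symmetric]
      using Bv0 Bd0 Cs_pos by simp
    show "Bv * Cs a b + 4 * norm \<nu> + 4 * (Bd * Cs a b) \<le> Cb" unfolding Cb_def Bv_def[symmetric] Bd_def[symmetric]
      by simp
  qed (use N0 in auto)
  also have "\<dots> = Cb * Sp_norm p g" unfolding Sp_norm_def N_def by (simp add: algebra_simps)
  finally show ?thesis using mem by simp
qed

lemma phi_in_ball: "z \<in> ball 0 1 \<Longrightarrow> phi a b z \<in> ball 0 1"
  using phi_ball[OF ab, of z] ab by simp

lemma hd_T:
  assumes fh: "f holomorphic_on ball 0 1"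
  shows "(\<lambda>z. \<mu> * f z - Dphi (phi a b) f z) holomorphic_on ball 0 1"
    and "w \<in> ball 0 1 \<Longrightarrow> (deriv^^n) (\<lambda>z. \<mu> * f z - Dphi (phi a b) f z) w
            = \<mu> * (deriv^^n) f w - a^n * (deriv^^Suc n) f (phi a b w)"
proof -
  have dh: "deriv f holomorphic_on ball 0 1" by (rule holomorphic_deriv[OF fh]) simp
  have ph: "phi a b holomorphic_on ball 0 1" unfolding phi_def by (intro holomorphic_intros)
  have ch: "(\<lambda>z. deriv f (a*z+b)) holomorphic_on ball 0 1"
  proof -
    have sub: "phi a b ` ball 0 1 \<subseteq> ball 0 1" using phi_in_ball by auto
    show ?thesis using holomorphic_on_compose_gen[OF ph dh sub] unfolding phi_def by (simp add: o_def)
  qed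
  have mh: "(\<lambda>z. \<mu> * f z) holomorphic_on ball 0 1" by (intro holomorphic_intros fh)
  have Hh: "(\<lambda>z. \<mu> * f z - deriv f (a*z+b)) holomorphic_on ball 0 1"
    by (intro holomorphic_intros mh ch)
  have eq: "\<And>z. z \<in> ball 0 1 \<Longrightarrow> \<mu> * f z - deriv f (a*z+b) = \<mu> * f z - Dphi (phi a b) f z"
    by (simp add: Dphi_def phi_def)
  show Th: "(\<lambda>z. \<mu> * f z - Dphi (phi a b) f z) holomorphic_on ball 0 1"
    by (rule holomorphic_transform[OF Hh eq])
  assume w: "w \<in> ball 0 1"
  have "(deriv^^n) (\<lambda>z. \<mu> * f z - Dphi (phi a b) f z) w = (deriv^^n) (\<lambda>z. \<mu> * f z - deriv f (a*z+b)) w"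
    by (rule higher_deriv_transform_within_open[OF Th Hh open_ball w]) (use eq in auto)
  also have "\<dots> = (deriv^^n) (\<lambda>z. \<mu> * f z) w - (deriv^^n) (\<lambda>z. deriv f (a*z+b)) w"
    by (rule higher_deriv_diff[OF mh ch open_ball w])
  also have "(deriv^^n) (\<lambda>z. \<mu> * f z) w = \<mu> * (deriv^^n) f w"
    by (rule higher_deriv_cmult[OF fh w open_ball])
  also have "(deriv^^n) (\<lambda>z. deriv f (a*z+b)) w = a^n * (deriv^^n) (deriv f) (a*w+b)"
    by (rule higher_deriv_compose_linear'[OF dh open_ball open_ball w]) (use phi_in_ball in \<open>auto simp: phi_def\<close>)
  also have "(deriv^^n) (deriv f) (a*w+b) = (deriv^^Suc n) f (phi a b w)"
    by (simp only: funpow_Suc_right o_apply phi_def)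
  finally show "(deriv^^n) (\<lambda>z. \<mu> * f z - Dphi (phi a b) f z) w
            = \<mu> * (deriv^^n) f w - a^n * (deriv^^Suc n) f (phi a b w)" .
qed

lemma phi_iter_comm: "(phi a b ^^ n) (phi a b z) = (phi a b ^^ Suc n) z"
  by (simp only: funpow_Suc_right o_apply)

lemma R_eq1:
  assumes mn: "\<mu> * \<nu> = 1" and g: "g \<in> Sp p"
  shows "(\<lambda>z. \<mu> * Rop a b \<nu> g z - Dphi (phi a b) (Rop a b \<nu> g) z) = g"
proof
  fix z
  have gh: "g holomorphic_on ball 0 1" and gH: "in_Hp p (deriv g)" and gv: "\<And>z. z \<notin> ball 0 1 \<Longrightarrow> g z = 0"
    using g unfolding Sp_def by auto
  note RS = R_series[OF gh gH]
  show "\<mu> * Rop a b \<nu> g z - Dphi (phi a b) (Rop a b \<nu> g) z = g z"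
  proof (cases "z \<in> ball 0 1")
    case False thus ?thesis using gv by (simp add: Rop_def Dphi_def)
  next
    case True
    define u where "u = (\<lambda>n. \<nu>^n * tn a b n g z)"
    have pz: "phi a b z \<in> ball 0 1" using phi_in_ball True by simp
    have "(\<lambda>n. dterm a b \<nu> n g (phi a b z)) sums deriv (Rop a b \<nu> g) (phi a b z)"
      using RS(3) pz by auto
    moreover have "dterm a b \<nu> n g (phi a b z) = u (Suc n)" for n
      unfolding dterm_def u_def tn_def phi_iter_comm by simp
    ultimately have s1: "(\<lambda>n. u (Suc n)) sums Dphi (phi a b) (Rop a b \<nu> g) z"
      using True by (simp add: Dphi_def)
    have "(\<lambda>n. \<mu> * (\<nu>^Suc n * tn a b n g z)) sums (\<mu> * Rop a b \<nu> g z)"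
      using RS(1) True by (intro sums_mult) auto
    moreover have "\<mu> * (\<nu>^Suc n * tn a b n g z) = u n" for n
      unfolding u_def using mn by (simp add: mult.assoc[symmetric])
    ultimately have s2: "u sums (\<mu> * Rop a b \<nu> g z)" by simp
    have "u sums (Dphi (phi a b) (Rop a b \<nu> g) z + u 0)" using s1 sums_Suc_iff by blast
    hence "\<mu> * Rop a b \<nu> g z = Dphi (phi a b) (Rop a b \<nu> g) z + u 0" using s2 sums_unique2 by blast
    thus ?thesis by (simp add: u_def)
  qed
qed

lemma R_eq2:
  assumes mn: "\<mu> * \<nu> = 1" and f: "f \<in> Sp p"
  shows "Rop a b \<nu> (\<lambda>z. \<mu> * f z - Dphi (phi a b) f z) = f"
proof
  fix z
  have fh: "f holomorphic_on ball 0 1" and fH: "in_Hp p (deriv f)" and fv: "\<And>z. z \<notin> ball 0 1 \<Longrightarrow> f z = 0"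
    using f unfolding Sp_def by auto
  note RS = R_series[OF fh fH]
  show "Rop a b \<nu> (\<lambda>z. \<mu> * f z - Dphi (phi a b) f z) z = f z"
  proof (cases "z \<in> ball 0 1")
    case False thus ?thesis using fv by (simp add: Rop_def)
  next
    case True
    define u where "u = (\<lambda>n. \<nu>^n * tn a b n f z)"
    have tt: "\<nu>^Suc n * tn a b n (\<lambda>z. \<mu> * f z - Dphi (phi a b) f z) z = u n - u (Suc n)" for n
    proof -
      have w: "(phi a b ^^ n) z \<in> ball 0 1" using iter_ball(1)[OF ab, of z n] True by simp
      have "tn a b n (\<lambda>z. \<mu> * f z - Dphi (phi a b) f z) z = \<mu> * tn a b n f z - tn a b (Suc n) f z"
        unfolding tn_def hd_T(2)[OF fh w] coef_Suc phi_iter_comm by (simp add: algebra_simps)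
      have e: "\<nu>^Suc n * \<mu> = \<nu>^n"
      proof -
        have "\<nu>^Suc n * \<mu> = (\<mu> * \<nu>) * \<nu>^n" by (simp add: mult_ac)
        thus ?thesis using mn by simp
      qed
      have "\<nu>^Suc n * (\<mu> * tn a b n f z - tn a b (Suc n) f z) = (\<nu>^Suc n * \<mu>) * tn a b n f z - \<nu>^Suc n * tn a b (Suc n) f z"
        by (simp add: algebra_simps)
      also have "\<dots> = u n - u (Suc n)" unfolding e u_def by simp
      finally show ?thesis using \<open>tn a b n (\<lambda>z. \<mu> * f z - Dphi (phi a b) f z) z = \<mu> * tn a b n f z - tn a b (Suc n) f z\<close> by simp
    qed
    have "(\<lambda>n. \<nu>^Suc n * tn a b n f z) \<longlonglongrightarrow> 0"
      using RS(1) True summable_LIMSEQ_zero sums_summable by blast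
    hence "(\<lambda>n. \<mu> * (\<nu>^Suc n * tn a b n f z)) \<longlonglongrightarrow> 0" by (rule tendsto_mult_right_zero)
    moreover have "\<mu> * (\<nu>^Suc n * tn a b n f z) = u n" for n
      unfolding u_def using mn by (simp add: mult.assoc[symmetric])
    ultimately have "u \<longlonglongrightarrow> 0" by simp
    hence "(\<lambda>n. u n - u (Suc n)) sums (u 0 - 0)" by (rule telescope_sums')
    hence "(\<lambda>n. \<nu>^Suc n * tn a b n (\<lambda>z. \<mu> * f z - Dphi (phi a b) f z) z) sums f z"
      unfolding tt by (simp add: u_def)
    thus ?thesis using True unfolding Rop_def by (simp add: sums_iff)
  qed
qed

lemma T_Sp:
  assumes f: "f \<in> Sp p"
  shows "(\<lambda>z. \<mu> * f z - Dphi (phi a b) f z) \<in> Sp p"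
proof -
  have fh: "f holomorphic_on ball 0 1" and fH: "in_Hp p (deriv f)" and fv: "\<And>z. z \<notin> ball 0 1 \<Longrightarrow> f z = 0"
    using f unfolding Sp_def by auto
  define H where "H = (\<lambda>z. \<mu> * f z - Dphi (phi a b) f z)"
  have Hh: "H holomorphic_on ball 0 1" unfolding H_def by (rule hd_T(1)[OF fh])
  have dH: "deriv H holomorphic_on ball 0 1" by (rule holomorphic_deriv[OF Hh]) simp
  define E where "E = norm a * (fact 1 * (Cs a b * Hp_norm p (deriv f)) / dl a b^1)"
  have "in_Hp p (deriv H) \<and> Hp_norm p (deriv H) \<le> 4 * (norm \<mu> * Hp_norm p (deriv f) + E)"
  proof (rule Hp_perturb[OF p fH dH, of \<mu> "\<lambda>w. - a * (deriv^^2) f (phi a b w)"])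
    fix w :: complex assume w: "w \<in> ball 0 1"
    show "deriv H w = \<mu> * deriv f w + - a * (deriv^^2) f (phi a b w)"
      using hd_T(2)[OF fh w, of 1] unfolding H_def by (simp add: numeral_2_eq_2)
    have v: "norm (phi a b w) \<le> rho a b" using phi_ball[OF ab, of w] w by (simp add: rho_def)
    have "norm ((deriv^^2) f (phi a b w)) \<le> fact 1 * (Cs a b * Hp_norm p (deriv f)) / dl a b^1"
      using deriv_bound[OF p fh fH _ _ v, of 2] ab unfolding Cs_def dl_def rho_def by simp
    hence "norm a * norm ((deriv^^2) f (phi a b w)) \<le> norm a * (fact 1 * (Cs a b * Hp_norm p (deriv f)) / dl a b^1)"
      by (rule mult_left_mono) simp
    thus "norm (- a * (deriv^^2) f (phi a b w)) \<le> E" unfolding E_def by (simp add: norm_mult)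
  qed
  hence "in_Hp p (deriv H)" by simp
  moreover have "\<forall>z. z \<notin> ball 0 1 \<longrightarrow> H z = 0" using fv by (simp add: H_def Dphi_def)
  ultimately show ?thesis using Hh unfolding Sp_def H_def by auto
qed


end

lemma zero_in_Hp: "in_Hp p (\<lambda>z. 0)"
proof -
  have "circle_mean p (\<lambda>z. 0) r = 0" for r unfolding circle_mean_def by simp
  hence "bdd_above (circle_mean p (\<lambda>z. 0) ` {0<..<1})" by (auto intro: bdd_aboveI[where M=0])
  thus ?thesis unfolding in_Hp_def by (auto intro: holomorphic_intros)
qed

lemma zero_Sp: "p > 1 \<Longrightarrow> (\<lambda>z. 0) \<in> Sp p"
  unfolding Sp_def using zero_in_Hp[of p] by (auto intro: holomorphic_intros)

lemma one_props:
  assumes p: "p > 1"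
  defines "one \<equiv> (\<lambda>z::complex. if z \<in> ball 0 1 then 1 else (0::complex))"
  shows "one \<in> Sp p" and "\<And>w. w \<in> ball 0 1 \<Longrightarrow> deriv one w = 0"
proof -
  have h: "one holomorphic_on ball 0 1"
    by (rule holomorphic_transform[of "\<lambda>z. 1"]) (auto simp: one_def intro: holomorphic_intros)
  show d: "deriv one w = 0" if w: "w \<in> ball 0 1" for w
  proof -
    have "(one has_field_derivative 0) (at w)"
      by (rule has_field_derivative_transform_within_open[of "\<lambda>z. 1" 0 w "ball 0 1"])
         (use w in \<open>auto simp: one_def\<close>)
    thus ?thesis by (rule DERIV_imp_deriv)
  qed
  have dh: "deriv one holomorphic_on ball 0 1" by (rule holomorphic_deriv[OF h]) simp
  have "in_Hp p (deriv one) \<and> Hp_norm p (deriv one) \<le> 4 * (norm (0::complex) * Hp_norm p (\<lambda>z. 0) + 0)"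
    by (rule Hp_perturb[OF p zero_in_Hp dh, of 0 "deriv one"]) (use d in auto)
  thus "one \<in> Sp p" unfolding Sp_def using h by (auto simp: one_def)
qed

theorem theorem4p1:
  fixes p :: real and a b :: complex
  assumes "p > 1" and "0 < norm a" and "norm a < 1 - norm b"
  shows "op_spectrum (Sp p) (Sp_norm p) (Dphi (\<lambda>z. a * z + b)) = {0}"
proof -
  have p: "p > 1" using assms(1) .
  have ab: "norm a + norm b < 1" using assms(3) by simp
  have T: "Dphi (\<lambda>z. a * z + b) = Dphi (phi a b)" by (simp add: phi_def)
  have nz: "\<mu> \<notin> op_spectrum (Sp p) (Sp_norm p) (Dphi (phi a b))" if mu: "\<mu> \<noteq> 0" for \<mu>
  proof -
    define \<nu> where "\<nu> = 1/\<mu>"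
    have nu: "\<nu> \<noteq> 0" and mn: "\<mu> * \<nu> = 1" using mu by (auto simp: \<nu>_def)
    have C: "\<exists>C. \<forall>g\<in>Sp p. Sp_norm p (Rop a b \<nu> g) \<le> C * Sp_norm p g"
      using R_Sp[OF p ab nu] by blast
    have "(\<forall>f\<in>Sp p. (\<lambda>z. \<mu> * f z - Dphi (phi a b) f z) \<in> Sp p) \<and>
        (\<forall>g\<in>Sp p. Rop a b \<nu> g \<in> Sp p \<and> (\<lambda>z. \<mu> * Rop a b \<nu> g z - Dphi (phi a b) (Rop a b \<nu> g) z) = g) \<and>
        (\<forall>f\<in>Sp p. Rop a b \<nu> (\<lambda>z. \<mu> * f z - Dphi (phi a b) f z) = f) \<and>
        (\<exists>C. \<forall>g\<in>Sp p. Sp_norm p (Rop a b \<nu> g) \<le> C * Sp_norm p g)"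
    proof (intro conjI ballI)
      show "\<And>f. f \<in> Sp p \<Longrightarrow> (\<lambda>z. \<mu> * f z - Dphi (phi a b) f z) \<in> Sp p"
        by (rule T_Sp[OF p ab nu])
      show "\<And>g. g \<in> Sp p \<Longrightarrow> Rop a b \<nu> g \<in> Sp p" using R_Sp[OF p ab nu] by blast
      show "\<And>g. g \<in> Sp p \<Longrightarrow> (\<lambda>z. \<mu> * Rop a b \<nu> g z - Dphi (phi a b) (Rop a b \<nu> g) z) = g"
        by (rule R_eq1[OF p ab nu mn])
      show "\<And>f. f \<in> Sp p \<Longrightarrow> Rop a b \<nu> (\<lambda>z. \<mu> * f z - Dphi (phi a b) f z) = f"
        by (rule R_eq2[OF p ab nu mn])
      show "\<exists>C. \<forall>g\<in>Sp p. Sp_norm p (Rop a b \<nu> g) \<le> C * Sp_norm p g" by (rule C)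
    qed
    thus ?thesis unfolding op_spectrum_def by blast
  qed
  have zero: "0 \<in> op_spectrum (Sp p) (Sp_norm p) (Dphi (phi a b))"
    unfolding op_spectrum_def
  proof (rule CollectI, rule notI, elim exE conjE)
    fix R :: "(complex \<Rightarrow> complex) \<Rightarrow> (complex \<Rightarrow> complex)"
    assume inv: "\<forall>f\<in>Sp p. R (\<lambda>z. 0 * f z - Dphi (phi a b) f z) = f"
    define one where "one = (\<lambda>z::complex. if z \<in> ball 0 1 then 1 else (0::complex))"
    have o1: "one \<in> Sp p" and o2: "\<And>w. w \<in> ball 0 1 \<Longrightarrow> deriv one w = 0"
      using one_props[OF p] unfolding one_def by auto
    have "(\<lambda>z. 0 * one z - Dphi (phi a b) one z) = (\<lambda>z. 0)"
    proof
      fix z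
      have pb: "phi a b z \<in> ball 0 1" if "z \<in> ball 0 1" using phi_in_ball[OF p ab, of 1] that by simp
      show "0 * one z - Dphi (phi a b) one z = 0"
      proof (cases "z \<in> ball 0 1")
        case True thus ?thesis using o2[OF pb[OF True]] by (simp add: Dphi_def)
      next
        case False thus ?thesis by (simp add: Dphi_def)
      qed
    qed
    moreover have "(\<lambda>z. 0 * (0::complex) - Dphi (phi a b) (\<lambda>z. 0) z) = (\<lambda>z. 0)"
      by (auto simp: Dphi_def)
    ultimately have e1: "(\<lambda>z. 0 * one z - Dphi (phi a b) one z) = (\<lambda>z. 0 * (0::complex) - Dphi (phi a b) (\<lambda>z. 0) z)"
      by simp
    have "one = R (\<lambda>z. 0 * one z - Dphi (phi a b) one z)" using inv o1 by simp
    also have "\<dots> = R (\<lambda>z. 0 * (0::complex) - Dphi (phi a b) (\<lambda>z. 0) z)" unfolding e1 ..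
    also have "\<dots> = (\<lambda>z. 0)" using bspec[OF inv zero_Sp[OF p]] by simp
    finally have "one = (\<lambda>z. 0)" .
    hence "one 0 = 0" by simp
    thus False by (simp add: one_def)
  qed
  show ?thesis unfolding T
  proof
    show "op_spectrum (Sp p) (Sp_norm p) (Dphi (phi a b)) \<subseteq> {0}" using nz by blast
    show "{0} \<subseteq> op_spectrum (Sp p) (Sp_norm p) (Dphi (phi a b))" using zero by simp
  qed
qed

end
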